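(* Let $(P_t)_{t>0}$ be a Markovian semigroup on $\mathscr{B}_b(\mathbb{R}^d)$ and fix $t>0$. Suppose that $P_tf(x)=\int_{\mathbb{R}^d}f(y)q_t(x,y)\,dy$ for all $f\in\mathscr{B}_b(\mathbb{R}^d)$, for some nonnegative measurable function $q_t:\mathbb{R}^d\times\mathbb{R}^d\to\mathbb{R}$. Assume that $P_t$ is Feller and that for every $M>0$ and every $x_0\in\mathbb{R}^d$ there exist $p>1$ and $\gamma>0$ such that \[ \sup_{x\in\mathbb{R}^d:\,|x-x_0|<\gamma}\int_{\{y\in\mathbb{R}^d:\,|y|\leq M\}}q_t(x,y)^p\,dy<\infty. \] Then $P_t$ is strong Feller.
   Context: $\mathscr{B}_b(\mathbb{R}^d)$ is the space of bounded Borel functions on $\mathbb{R}^d$ and $C_b(\mathbb{R}^d)$ the bounded continuous functions. A linear positivity-preserving operator $A$ on $\mathscr{B}_b(\mathbb{R}^d)$ is Markovian if $\|A\phi\|_\infty\leq\|\phi\|_\infty$ for all $\phi$ and $A1=1$; it is Feller if $A(C_b(\mathbb{R}^d))\subseteq C_b(\mathbb{R}^d)$ and strong Feller if $A(\mathscr{B}_b(\mathbb{R}^d))\subseteq C_b(\mathbb{R}^d)$. *)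

theory Defs
  imports "HOL-Analysis.Analysis"
begin

definition Bb :: "('a::euclidean_space \<Rightarrow> real) set" where
  "Bb = {f. f \<in> borel_measurable borel \<and> bounded (range f)}"

definition sup_norm :: "('a \<Rightarrow> real) \<Rightarrow> real" where
  "sup_norm f = (SUP y. \<bar>f y\<bar>)"

definition markovian_op :: "(('a::euclidean_space \<Rightarrow> real) \<Rightarrow> ('a \<Rightarrow> real)) \<Rightarrow> bool" where
  "markovian_op A \<longleftrightarrow>
     (\<forall>f\<in>Bb. A f \<in> Bb) \<and>
     (\<forall>f\<in>Bb. \<forall>g\<in>Bb. \<forall>a b::real. A (\<lambda>x. a * f x + b * g x) = (\<lambda>x. a * A f x + b * A g x)) \<and>
     (\<forall>f\<in>Bb. (\<forall>x. f x \<ge> 0) \<longrightarrow> (\<forall>x. A f x \<ge> 0)) \<and>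
     (\<forall>f\<in>Bb. sup_norm (A f) \<le> sup_norm f) \<and>
     A (\<lambda>_. 1) = (\<lambda>_. 1)"

definition markovian_semigroup :: "(real \<Rightarrow> ('a::euclidean_space \<Rightarrow> real) \<Rightarrow> ('a \<Rightarrow> real)) \<Rightarrow> bool" where
  "markovian_semigroup P \<longleftrightarrow>
     (\<forall>t>0. markovian_op (P t)) \<and>
     (\<forall>s>0. \<forall>t>0. \<forall>f\<in>Bb. P (s + t) f = P s (P t f))"

definition feller :: "(('a::euclidean_space \<Rightarrow> real) \<Rightarrow> ('a \<Rightarrow> real)) \<Rightarrow> bool" where
  "feller A \<longleftrightarrow> (\<forall>f\<in>Bb. continuous_on UNIV f \<longrightarrow> continuous_on UNIV (A f) \<and> bounded (range (A f)))"

definition strong_feller :: "(('a::euclidean_space \<Rightarrow> real) \<Rightarrow> ('a \<Rightarrow> real)) \<Rightarrow> bool" where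
  "strong_feller A \<longleftrightarrow> (\<forall>f\<in>Bb. continuous_on UNIV (A f) \<and> bounded (range (A f)))"

end

theory Submission
  imports Defs
begin

definition psi :: "real \<Rightarrow> 'a::euclidean_space \<Rightarrow> real" where
  "psi M y = max 0 (min 1 (norm y - M))"

lemma psi_cont: "continuous_on UNIV (psi M)"
  unfolding psi_def by (intro continuous_intros)

lemma psi_meas[measurable]: "psi M \<in> borel_measurable borel"
  using psi_cont by (intro borel_measurable_continuous_onI)

lemma psi_bounds: "0 \<le> psi M y" "psi M y \<le> 1"
  unfolding psi_def by auto

lemma pointwise_est:
  fixes hy qy c K p :: real
  assumes "\<bar>hy\<bar> \<le> c" "qy \<ge> 0" "K > 0" "p > 1" "0 \<le> ps" "ps \<le> 1"
    and "\<not> ind \<Longrightarrow> ps = 1"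
  shows "\<bar>hy\<bar> * qy \<le> c * (ps * qy) + K * ((if ind then 1 else 0) * \<bar>hy\<bar>)
           + c / K powr (p - 1) * ((if ind then 1 else 0) * qy powr p)"
proof (cases ind)
  case False
  have "\<bar>hy\<bar> * qy \<le> c * qy" using assms by (simp add: mult_right_mono)
  then show ?thesis using False assms by simp
next
  case True
  have c0: "c \<ge> 0" using assms by linarith
  have t1: "0 \<le> c * (ps * qy)" using assms c0 by simp
  have "\<bar>hy\<bar> * qy \<le> K * \<bar>hy\<bar> + c / K powr (p - 1) * qy powr p"
  proof (cases "qy \<le> K")
    case True
    have "\<bar>hy\<bar> * qy \<le> K * \<bar>hy\<bar>" using True by (simp add: mult.commute mult_right_mono)
    moreover have "0 \<le> c / K powr (p - 1) * qy powr p" using c0 by simp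
    ultimately show ?thesis by linarith
  next
    case False
    then have qpos: "qy > 0" "K \<le> qy" using assms by auto
    have "qy powr p = qy * qy powr (p - 1)"
      using qpos powr_add[of qy 1 "p - 1"] by simp
    moreover have "K powr (p - 1) \<le> qy powr (p - 1)"
      using qpos assms by (intro powr_mono2) auto
    ultimately have "qy \<le> qy powr p / K powr (p - 1)"
      using qpos assms by (simp add: field_simps mult_left_mono)
    then have "c * qy \<le> c / K powr (p - 1) * qy powr p"
      using mult_left_mono[OF \<open>qy \<le> qy powr p / K powr (p - 1)\<close> c0] by simp
    moreover have "\<bar>hy\<bar> * qy \<le> c * qy" using assms by (simp add: mult_right_mono)
    moreover have "0 \<le> K * \<bar>hy\<bar>" using assms by simp
    ultimately show ?thesis by linarith
  qed
  then show ?thesis using True t1 by simp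
qed

lemma ballset_meas[measurable]: "{y::'a::euclidean_space. norm y \<le> r} \<in> sets borel"
  by (intro borel_closed closed_Collect_le continuous_intros)

lemma ballset_fin: "emeasure lborel {y::'a::euclidean_space. norm y \<le> r} < \<infinity>"
  by (intro emeasure_bounded_finite) (auto simp: bounded_iff)

lemma integral_est:
  fixes h Q :: "'a::euclidean_space \<Rightarrow> real"
  assumes Qm: "Q \<in> borel_measurable borel" and Q0: "\<And>y. Q y \<ge> 0" and Qi: "integrable lborel Q"
    and hm: "h \<in> borel_measurable borel" and hb: "\<And>y. \<bar>h y\<bar> \<le> c"
    and K: "K > 0" and p: "p > 1" and S0: "S \<ge> 0"
    and S: "(\<integral>\<^sup>+ y. indicator {y. norm y \<le> M + 1} y * ennreal (Q y powr p) \<partial>lborel) \<le> ennreal S"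
  shows "\<bar>\<integral> y. h y * Q y \<partial>lborel\<bar> \<le> c * (\<integral> y. psi M y * Q y \<partial>lborel)
     + K * (\<integral> y. indicator {y. norm y \<le> M + 1} y * \<bar>h y\<bar> \<partial>lborel) + c / K powr (p - 1) * S"
proof -
  define B where "B = {y::'a. norm y \<le> M + 1}"
  have Bm[measurable]: "B \<in> sets borel" unfolding B_def by measurable
  have c0: "c \<ge> 0" using hb[of 0] by linarith
  note [measurable] = Qm hm
  have m1: "(\<lambda>y. h y * Q y) \<in> borel_measurable borel" "(\<lambda>y. psi M y * Q y) \<in> borel_measurable borel"
    "(\<lambda>y. indicator B y * \<bar>h y\<bar>) \<in> borel_measurable borel"
    "(\<lambda>y. indicator B y * Q y powr p) \<in> borel_measurable borel" by measurable
  have i1: "integrable lborel (\<lambda>y. h y * Q y)"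
    by (rule Bochner_Integration.integrable_bound[OF integrable_mult_right[OF Qi, of c]])
       (use m1 Q0 hb c0 in \<open>auto simp: abs_mult intro!: mult_right_mono\<close>)
  have i2: "integrable lborel (\<lambda>y. psi M y * Q y)"
    by (rule Bochner_Integration.integrable_bound[OF Qi]) (use m1 in simp, intro AE_I2, simp add: abs_mult abs_of_nonneg[OF psi_bounds(1)] mult_left_le_one_le Q0 psi_bounds)
  have iB: "integrable lborel (\<lambda>y. indicator B y * c)"
    using ballset_fin[of "M+1"] unfolding B_def by (intro integrable_mult_left) (auto intro!: integrable_real_indicator)
  have i3: "integrable lborel (\<lambda>y. indicator B y * \<bar>h y\<bar>)"
    by (rule Bochner_Integration.integrable_bound[OF iB]) (use m1 hb c0 in \<open>auto simp: indicator_def\<close>)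
  have eqS: "(\<integral>\<^sup>+ y. indicator B y * ennreal (Q y powr p) \<partial>lborel) = (\<integral>\<^sup>+ y. ennreal (indicator B y * Q y powr p) \<partial>lborel)"
    by (intro nn_integral_cong) (auto simp: indicator_def)
  have i4: "integrable lborel (\<lambda>y. indicator B y * Q y powr p)"
  proof (rule integrableI_bounded)
    show "(\<integral>\<^sup>+ y. ennreal (norm (indicator B y * Q y powr p)) \<partial>lborel) < \<infinity>"
      using S eqS unfolding B_def[symmetric] by (simp add: indicator_def top.not_eq_extremum le_less_trans)
  qed (use m1 in simp)
  have IS: "(\<integral> y. indicator B y * Q y powr p \<partial>lborel) \<le> S"
  proof -
    have "ennreal (\<integral> y. indicator B y * Q y powr p \<partial>lborel) = (\<integral>\<^sup>+ y. ennreal (indicator B y * Q y powr p) \<partial>lborel)"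
      using i4 by (intro nn_integral_eq_integral[symmetric]) auto
    with S eqS have "ennreal (\<integral> y. indicator B y * Q y powr p \<partial>lborel) \<le> ennreal S"
      unfolding B_def by simp
    then show ?thesis using S0 by simp
  qed
  have "\<bar>\<integral> y. h y * Q y \<partial>lborel\<bar> \<le> (\<integral> y. \<bar>h y * Q y\<bar> \<partial>lborel)"
    by (rule integral_abs_bound)
  also have "\<dots> \<le> (\<integral> y. c * (psi M y * Q y) + K * (indicator B y * \<bar>h y\<bar>)
           + c / K powr (p - 1) * (indicator B y * Q y powr p) \<partial>lborel)"
  proof (rule integral_mono)
    show "integrable lborel (\<lambda>y. \<bar>h y * Q y\<bar>)" using i1 by auto
    show "integrable lborel (\<lambda>y. c * (psi M y * Q y) + K * (indicator B y * \<bar>h y\<bar>)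
           + c / K powr (p - 1) * (indicator B y * Q y powr p))"
      using i2 i3 i4 by auto
    fix y
    have "\<bar>h y\<bar> * Q y \<le> c * (psi M y * Q y) + K * ((if y \<in> B then 1 else 0) * \<bar>h y\<bar>)
           + c / K powr (p - 1) * ((if y \<in> B then 1 else 0) * Q y powr p)"
      by (rule pointwise_est) (use hb Q0 K p psi_bounds in \<open>auto simp: B_def psi_def\<close>)
    then show "\<bar>h y * Q y\<bar> \<le> c * (psi M y * Q y) + K * (indicator B y * \<bar>h y\<bar>)
           + c / K powr (p - 1) * (indicator B y * Q y powr p)"
      using Q0[of y] by (simp add: abs_mult indicator_def split: if_splits)
  qed
  also have "\<dots> = c * (\<integral> y. psi M y * Q y \<partial>lborel) + K * (\<integral> y. indicator B y * \<bar>h y\<bar> \<partial>lborel)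
     + c / K powr (p - 1) * (\<integral> y. indicator B y * Q y powr p \<partial>lborel)"
    using i2 i3 i4 by simp
  also have "\<dots> \<le> c * (\<integral> y. psi M y * Q y \<partial>lborel) + K * (\<integral> y. indicator B y * \<bar>h y\<bar> \<partial>lborel)
     + c / K powr (p - 1) * S"
    using IS c0 by (simp add: mult_left_mono divide_right_mono)
  finally show ?thesis unfolding B_def .
qed

lemma int_bdd:
  fixes h Q :: "'a::euclidean_space \<Rightarrow> real"
  assumes "integrable lborel Q" "h \<in> borel_measurable borel" "\<And>y. \<bar>h y\<bar> \<le> c"
  shows "integrable lborel (\<lambda>y. h y * Q y)"
proof (rule Bochner_Integration.integrable_bound[OF integrable_mult_right[OF assms(1), of c]])
  show "(\<lambda>y. h y * Q y) \<in> borel_measurable lborel"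
    using assms(1,2) borel_measurable_integrable by (auto intro!: borel_measurable_times)
  show "AE x in lborel. norm (h x * Q x) \<le> norm (c * Q x)"
  proof (intro AE_I2)
    fix x
    have "\<bar>h x\<bar> * \<bar>Q x\<bar> \<le> \<bar>c\<bar> * \<bar>Q x\<bar>" using assms(3)[of x] by (intro mult_right_mono) auto
    then show "norm (h x * Q x) \<le> norm (c * Q x)" by (simp add: abs_mult)
  qed
qed

lemma cont_from_approx:
  fixes F :: "'a::metric_space \<Rightarrow> real"
  assumes "\<And>e. e > 0 \<Longrightarrow> \<exists>G d. d > 0 \<and> isCont G x0 \<and> (\<forall>x. dist x x0 < d \<longrightarrow> \<bar>G x - F x\<bar> \<le> e)"
  shows "isCont F x0"
  unfolding continuous_at_eps_delta
proof (intro allI impI)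
  fix e :: real assume e: "e > 0"
  obtain G d where d: "d > 0" "isCont G x0" "\<And>x. dist x x0 < d \<Longrightarrow> \<bar>G x - F x\<bar> \<le> e/4"
    using assms[of "e/4"] e by auto
  have "\<forall>e>0. \<exists>d>0. \<forall>x. dist x x0 < d \<longrightarrow> dist (G x) (G x0) < e"
    using d(2) unfolding continuous_at_eps_delta .
  moreover have "e/4 > 0" using e by simp
  ultimately obtain d2 where d2: "d2 > 0" "\<And>x. dist x x0 < d2 \<Longrightarrow> dist (G x) (G x0) < e/4"
    by blast
  show "\<exists>d>0. \<forall>x'. dist x' x0 < d \<longrightarrow> dist (F x') (F x0) < e"
  proof (intro exI[of _ "min d d2"] conjI allI impI)
    fix x assume "dist x x0 < min d d2"
    then have "\<bar>G x - F x\<bar> \<le> e/4" "\<bar>G x0 - F x0\<bar> \<le> e/4" "dist (G x) (G x0) < e/4"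
      using d d2 by auto
    then show "dist (F x) (F x0) < e" unfolding dist_real_def by arith
  next
    show "min d d2 > 0" using d(1) d2(1) by simp
  qed
qed

theorem lemma5p1:
  fixes P :: "real \<Rightarrow> ('a::euclidean_space \<Rightarrow> real) \<Rightarrow> ('a \<Rightarrow> real)"
    and q :: "'a \<Rightarrow> 'a \<Rightarrow> real"
    and t :: real
  assumes semigroup: "markovian_semigroup P"
    and t_pos: "t > 0"
    and q_meas: "(\<lambda>(x, y). q x y) \<in> borel_measurable borel"
    and q_nonneg: "\<And>x y. q x y \<ge> 0"
    and kernel: "\<And>f x. f \<in> Bb \<Longrightarrow> P t f x = (\<integral>y. f y * q x y \<partial>lborel)"
    and fel: "feller (P t)"
    and loc_Lp: "\<And>M x0. M > 0 \<Longrightarrow> \<exists>p>1. \<exists>\<gamma>>0.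
        (SUP x\<in>ball x0 \<gamma>. \<integral>\<^sup>+ y. indicator {y. norm y \<le> M} y * ennreal (q x y powr p) \<partial>lborel) < \<infinity>"
  shows "strong_feller (P t)"
proof -
  have mop: "markovian_op (P t)" using semigroup t_pos unfolding markovian_semigroup_def by auto
  have qm: "(\<lambda>y. q x y) \<in> borel_measurable borel" for x
  proof -
    have "(\<lambda>y::'a. (x, y)) \<in> borel_measurable borel"
      by (intro borel_measurable_continuous_onI continuous_intros)
    from measurable_compose[OF this q_meas] show ?thesis by simp
  qed
  have one_Bb: "(\<lambda>_. 1::real) \<in> Bb" unfolding Bb_def by auto
  have qint: "integrable lborel (\<lambda>y. q x y)" for x
  proof -
    have "P t (\<lambda>_. 1) x = 1" using mop unfolding markovian_op_def by simp
    then have 1: "(\<integral> y. q x y \<partial>lborel) = 1" using kernel[OF one_Bb, of x] by simp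
    show ?thesis using 1 not_integrable_integral_eq by force
  qed
  have Bb_cont: "\<And>g. g \<in> Bb \<Longrightarrow> continuous_on UNIV g \<Longrightarrow> continuous_on UNIV (P t g)"
    using fel unfolding feller_def by blast
  have psi_Bb: "psi M \<in> Bb" for M
    unfolding Bb_def bounded_iff using psi_bounds[of M] by (auto intro!: exI[of _ 1] simp: abs_le_iff) (smt (verit) psi_bounds(1))
  have isc: "\<And>g x. g \<in> Bb \<Longrightarrow> continuous_on UNIV g \<Longrightarrow> isCont (P t g) x"
    using Bb_cont by (simp add: continuous_on_eq_continuous_at)
  show ?thesis unfolding strong_feller_def
  proof (intro ballI conjI)
    fix f :: "'a \<Rightarrow> real" assume fB: "f \<in> Bb"
    show "bounded (range (P t f))" using mop fB unfolding markovian_op_def Bb_def by auto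
    obtain B where B: "\<And>y. \<bar>f y\<bar> \<le> B" using fB unfolding Bb_def bounded_iff by auto
    have B0: "B \<ge> 0" using B[of 0] by linarith
    have fm[measurable]: "f \<in> borel_measurable borel" using fB by (simp add: Bb_def)
    have "f measurable_on UNIV"
      by (rule lebesgue_measurable_imp_measurable_on_real) (use fm in \<open>auto intro: measurable_completion\<close>)
    then obtain N g where N: "negligible N" and gc: "\<And>n. continuous_on UNIV (g n)"
      and gl: "\<And>y. y \<notin> N \<Longrightarrow> (\<lambda>n. g n y) \<longlonglongrightarrow> f y"
      unfolding measurable_on_def by auto
    define G where "G n y = max (-B) (min B (g n y))" for n y
    have Gc: "continuous_on UNIV (G n)" for n
      unfolding G_def using gc[of n] by (intro continuous_intros) auto
    have Gm[measurable]: "G n \<in> borel_measurable borel" for n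
      using Gc borel_measurable_continuous_onI by blast
    have Gb: "\<bar>G n y\<bar> \<le> B" for n y unfolding G_def using B0 by auto
    have GB: "G n \<in> Bb" for n unfolding Bb_def bounded_iff using Gb by auto
    have Gl: "AE y in lborel. (\<lambda>n. G n y) \<longlonglongrightarrow> f y"
    proof -
      have "N \<in> null_sets lebesgue" using N negligible_iff_null_sets by blast
      then have "AE y in lebesgue. y \<notin> N" by (rule AE_not_in)
      then have "AE y in lborel. y \<notin> N" by (simp add: AE_completion_iff)
      then show ?thesis
      proof eventually_elim
        case (elim y)
        have "(\<lambda>n. G n y) \<longlonglongrightarrow> max (-B) (min B (f y))"
          unfolding G_def by (intro tendsto_intros gl elim)
        moreover have "max (-B) (min B (f y)) = f y" using B[of y] by auto
        ultimately show ?case by simp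
      qed
    qed
    show "continuous_on UNIV (P t f)"
    proof (rule continuous_at_imp_continuous_on, intro ballI)
      fix x0 :: 'a
      show "isCont (P t f) x0"
      proof (rule cont_from_approx)
        fix e :: real assume e: "e > 0"
        define c where "c = 2 * B"
        have c0: "c \<ge> 0" using B0 by (simp add: c_def)
        define \<eta> where "\<eta> = e / (6 * (c + 1))"
        have \<eta>: "\<eta> > 0" using e c0 by (simp add: \<eta>_def)
        have "(\<lambda>n. P t (psi (real n)) x0) \<longlonglongrightarrow> 0"
        proof -
          note [measurable] = qm[of x0]
          have "(\<lambda>n. \<integral> y. psi (real n) y * q x0 y \<partial>lborel) \<longlonglongrightarrow> (\<integral> y. 0 \<partial>(lborel::'a measure))"
          proof (rule integral_dominated_convergence[where w="\<lambda>y. q x0 y" and M=lborel and f="\<lambda>y. 0" and s="\<lambda>n y. psi (real n) y * q x0 y"])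
            show "(\<lambda>y. 0::real) \<in> borel_measurable lborel" by simp
            show "(\<lambda>y. psi (real n) y * q x0 y) \<in> borel_measurable lborel" for n by measurable
            show "integrable lborel (\<lambda>y. q x0 y)" by (rule qint)
            show "AE y in lborel. (\<lambda>n. psi (real n) y * q x0 y) \<longlonglongrightarrow> 0"
            proof (intro AE_I2)
              fix y :: 'a
              have "eventually (\<lambda>n. psi (real n) y * q x0 y = 0) sequentially"
                using eventually_ge_at_top[of "nat \<lceil>norm y\<rceil>"]
              proof eventually_elim
                case (elim n)
                then have "norm y \<le> real n" by linarith
                then show ?case by (simp add: psi_def)
              qed
              then show "(\<lambda>n. psi (real n) y * q x0 y) \<longlonglongrightarrow> 0" by (rule tendsto_eventually)
            qed
            show "AE y in lborel. norm (psi (real n) y * q x0 y) \<le> q x0 y" for n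
            proof (intro AE_I2)
              fix y
              show "norm (psi (real n) y * q x0 y) \<le> q x0 y"
                using psi_bounds[of "real n" y] q_nonneg[of x0 y]
                by (simp add: abs_mult mult_left_le_one_le)
            qed
          qed
          then show ?thesis using kernel[OF psi_Bb] by simp
        qed
        from LIMSEQ_D[OF this \<eta>] obtain M0 where "\<bar>P t (psi (real M0)) x0\<bar> < \<eta>" by auto
        define M where "M = real M0"
        have M0: "P t (psi M) x0 < \<eta>" using \<open>\<bar>P t (psi (real M0)) x0\<bar> < \<eta>\<close> M_def by simp
        have "\<forall>e>0. \<exists>d>0. \<forall>x. dist x x0 < d \<longrightarrow> dist (P t (psi M) x) (P t (psi M) x0) < e"
          using isc[OF psi_Bb[of M] psi_cont[of M], of x0] unfolding continuous_at_eps_delta .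
        with \<eta> obtain d1 where d1: "d1 > 0" "\<And>x. dist x x0 < d1 \<Longrightarrow> dist (P t (psi M) x) (P t (psi M) x0) < \<eta>"
          by blast
        have "M + 1 > 0" using M_def by simp
        from loc_Lp[OF this, of x0] obtain p \<gamma> where p: "p > 1" and \<gamma>: "\<gamma> > 0" and
          Sfin: "(SUP x\<in>ball x0 \<gamma>. \<integral>\<^sup>+ y. indicator {y. norm y \<le> M + 1} y * ennreal (q x y powr p) \<partial>lborel) < \<infinity>"
          by auto
        define S where "S = enn2real (SUP x\<in>ball x0 \<gamma>. \<integral>\<^sup>+ y. indicator {y. norm y \<le> M + 1} y * ennreal (q x y powr p) \<partial>lborel)"
        have Sb: "(\<integral>\<^sup>+ y. indicator {y. norm y \<le> M + 1} y * ennreal (q x y powr p) \<partial>lborel) \<le> ennreal S"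
          if "x \<in> ball x0 \<gamma>" for x
          unfolding S_def using Sfin that by (simp del: mem_ball) (rule SUP_upper[OF that])
        have S0: "S \<ge> 0" by (simp add: S_def)
        define K where "K = (3 * (c * S + 1) / e) powr (1 / (p - 1))"
        have cS: "c * S \<ge> 0" using c0 S0 by simp
        have K: "K > 0" unfolding K_def using e cS by (simp add: add_nonneg_pos)
        have KK: "K powr (p - 1) = 3 * (c * S + 1) / e"
          unfolding K_def using p e cS by (simp add: powr_powr add_nonneg_pos)
        have third: "c / K powr (p - 1) * S \<le> e / 3"
        proof -
          have "c / K powr (p - 1) * S = e * (c * S) / (3 * (c * S + 1))"
            unfolding KK using e by (simp add: field_simps)
          also have "\<dots> \<le> e * (c * S + 1) / (3 * (c * S + 1))"
            using e c0 S0 by (intro divide_right_mono mult_left_mono) auto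
          also have "\<dots> = e / 3" using cS by (simp add: field_simps add_nonneg_pos)
          finally show ?thesis .
        qed
        define I where "I n = (\<integral> y. indicator {y. norm y \<le> M + 1} y * \<bar>G n y - f y\<bar> \<partial>lborel)" for n
        have "I \<longlonglongrightarrow> (\<integral> y. 0 \<partial>(lborel::'a measure))"
          unfolding I_def
        proof (rule integral_dominated_convergence[where w="\<lambda>y. indicator {y. norm y \<le> M + 1} y * c" and M=lborel and f="\<lambda>y. 0" and s="\<lambda>n y. indicator {y. norm y \<le> M + 1} y * \<bar>G n y - f y\<bar>"])
          show "(\<lambda>y. 0::real) \<in> borel_measurable lborel" by simp
          show "(\<lambda>y. indicator {y. norm y \<le> M + 1} y * \<bar>G n y - f y\<bar>) \<in> borel_measurable lborel" for n
            by measurable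
          show "integrable lborel (\<lambda>y. indicator {y::'a. norm y \<le> M + 1} y * c)"
            using ballset_fin[of "M+1"] by (intro integrable_mult_left) (auto intro!: integrable_real_indicator)
          show "AE y in lborel. (\<lambda>n. indicator {y. norm y \<le> M + 1} y * \<bar>G n y - f y\<bar>) \<longlonglongrightarrow> 0"
            using Gl
          proof eventually_elim
            case (elim y)
            have "(\<lambda>n. indicator {y. norm y \<le> M + 1} y * \<bar>G n y - f y\<bar>) \<longlonglongrightarrow>
                  indicator {y. norm y \<le> M + 1} y * \<bar>f y - f y\<bar>"
              by (intro tendsto_intros elim)
            then show ?case by simp
          qed
          show "AE y in lborel. norm (indicator {y. norm y \<le> M + 1} y * \<bar>G n y - f y\<bar>)
                 \<le> indicator {y. norm y \<le> M + 1} y * c" for n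
          proof (intro AE_I2)
            fix y
            have "\<bar>G n y - f y\<bar> \<le> c" using Gb[of n y] B[of y] by (simp add: c_def)
            then show "norm (indicator {y. norm y \<le> M + 1} y * \<bar>G n y - f y\<bar>)
                 \<le> indicator {y. norm y \<le> M + 1} y * c"
              by (simp add: indicator_def)
          qed
        qed
        then have "I \<longlonglongrightarrow> 0" by simp
        moreover have "e / (3 * K) > 0" using e K by simp
        ultimately obtain n where n: "\<bar>I n\<bar> < e / (3 * K)"
          using LIMSEQ_D by fastforce
        show "\<exists>G d. d > 0 \<and> isCont G x0 \<and> (\<forall>x. dist x x0 < d \<longrightarrow> \<bar>G x - P t f x\<bar> \<le> e)"
        proof (intro exI[of _ "P t (G n)"] exI[of _ "min d1 \<gamma>"] conjI allI impI)
          show "min d1 \<gamma> > 0" using d1(1) \<gamma> by simp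
          show "isCont (P t (G n)) x0" by (rule isc[OF GB Gc])
          fix x assume x: "dist x x0 < min d1 \<gamma>"
          have xb: "x \<in> ball x0 \<gamma>" using x by (simp add: dist_commute)
          have hb: "\<bar>G n y - f y\<bar> \<le> c" for y using Gb[of n y] B[of y] by (simp add: c_def)
          have "P t (G n) x - P t f x = (\<integral> y. (G n y - f y) * q x y \<partial>lborel)"
            using kernel[OF GB] kernel[OF fB] int_bdd[OF qint Gm Gb] int_bdd[OF qint fm B]
            by (simp add: left_diff_distrib)
          then have "\<bar>P t (G n) x - P t f x\<bar> \<le> c * (\<integral> y. psi M y * q x y \<partial>lborel) + K * I n + c / K powr (p - 1) * S"
            unfolding I_def
            by (simp only:) (rule integral_est[OF qm q_nonneg qint _ hb K p S0 Sb[OF xb]], measurable)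
          moreover have "(\<integral> y. psi M y * q x y \<partial>lborel) < 2 * \<eta>"
            using kernel[OF psi_Bb, of M] d1(2)[of x] M0 x by (simp add: dist_real_def abs_less_iff)
          then have "c * (\<integral> y. psi M y * q x y \<partial>lborel) \<le> c * (2 * \<eta>)"
            using c0 by (intro mult_left_mono) auto
          moreover have "c * (2 * \<eta>) \<le> e / 3"
          proof -
            have "c * (2 * \<eta>) = e * c / (3 * (c + 1))" unfolding \<eta>_def using c0 by (simp add: field_simps)
            also have "\<dots> \<le> e * (c + 1) / (3 * (c + 1))"
              using e c0 by (intro divide_right_mono mult_left_mono) auto
            also have "\<dots> = e / 3" using c0 by (simp add: field_simps)
            finally show ?thesis .
          qed
          moreover have "K * I n \<le> e / 3"
          proof -
            have "K * I n \<le> K * \<bar>I n\<bar>" using K by (intro mult_left_mono) auto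
            also have "\<dots> \<le> K * (e / (3 * K))" using K n by (intro mult_left_mono) auto
            also have "\<dots> = e / 3" using K by simp
            finally show ?thesis .
          qed
          ultimately show "\<bar>P t (G n) x - P t f x\<bar> \<le> e" using third by linarith
        qed
      qed
    qed
  qed
qed

end
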